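(* Let $n\equiv 3\pmod 4$ with $n>3$. Let $1\le r\le m$, let $M_r\in\mathfrak{C}_r$, and suppose $\det\tilde M_r>0$. If $E_m^*\in\mathfrak{E}_m$ satisfies $\det E_m^*=\max\{\det E: E\in\mathfrak{E}_m\}$, then $\det\tilde E_m^*>0$.
   Context: Fix an integer $n\equiv 3\pmod 4$, $n>3$. For $m\ge1$, $\mathfrak{C}_m$ is the set of symmetric positive definite $m\times m$ integer matrices $C=(c_{ij})$ with $c_{ii}=n$ and $c_{ij}\equiv n\pmod 4$ for all $i,j$. Given a fixed $M_r\in\mathfrak{C}_r$, for $m\ge r$, $\mathfrak{E}_m$ is the set of $E_m\in\mathfrak{C}_m$ whose leading $r\times r$ submatrix is $M_r$. For a square matrix $C$ of order $m$, $\tilde C$ denotes the matrix obtained from $C$ by replacing its $(m,m)$ entry by $3$. *)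

theory Defs
  imports Complex_Main "Jordan_Normal_Form.Determinant"
begin

definition pos_def_int :: "int mat \<Rightarrow> bool" where
  "pos_def_int C \<longleftrightarrow> C = transpose_mat C \<and>
     (\<forall>x \<in> carrier_vec (dim_row C). x \<noteq> 0\<^sub>v (dim_row C) \<longrightarrow>
        x \<bullet> (map_mat real_of_int C *\<^sub>v x) > (0::real))"

definition frakC :: "int \<Rightarrow> nat \<Rightarrow> int mat set" where
  "frakC n m = {C \<in> carrier_mat m m. pos_def_int C \<and>
      (\<forall>i<m. C $$ (i,i) = n) \<and>
      (\<forall>i<m. \<forall>j<m. C $$ (i,j) mod 4 = n mod 4)}"

definition frakE :: "int \<Rightarrow> int mat \<Rightarrow> nat \<Rightarrow> int mat set" where
  "frakE n Mr m = {E \<in> frakC n m.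
      \<forall>i<dim_row Mr. \<forall>j<dim_row Mr. E $$ (i,j) = Mr $$ (i,j)}"

definition tilde :: "int mat \<Rightarrow> int mat" where
  "tilde C = mat (dim_row C) (dim_col C)
     (\<lambda>(i,j). if i = dim_row C - 1 \<and> j = dim_col C - 1 then 3 else C $$ (i,j))"

end

theory Submission
  imports Defs
begin


definition setl :: "'a mat \<Rightarrow> 'a \<Rightarrow> 'a mat" where
  "setl C a = mat (dim_row C) (dim_col C)
     (\<lambda>(i,j). if i = dim_row C - 1 \<and> j = dim_col C - 1 then a else C $$ (i,j))"

lemma tilde_setl: "tilde C = setl C 3"
  unfolding tilde_def setl_def by simp

lemma det_setl:
  fixes C :: "'a :: comm_ring_1 mat"
  assumes C: "C \<in> carrier_mat (Suc k) (Suc k)"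
  shows "det (setl C a) = det C + (a - C $$ (k,k)) * det (mat_delete C k k)"
proof -
  have S: "setl C a \<in> carrier_mat (Suc k) (Suc k)" using C unfolding setl_def by auto
  have md: "mat_delete (setl C a) i k = mat_delete C i k" for i
    using C unfolding mat_delete_def setl_def by (intro eq_matI) auto
  have cf: "cofactor (setl C a) i k = cofactor C i k" for i
    unfolding cofactor_def md ..
  have "det (setl C a) = (\<Sum>i<Suc k. setl C a $$ (i,k) * cofactor C i k)"
    using laplace_expansion_column[OF S, of k] cf by simp
  also have "\<dots> = (\<Sum>i<k. C $$ (i,k) * cofactor C i k) + a * cofactor C k k"
    using C unfolding setl_def by (simp add: lessThan_Suc)
  also have "det C = (\<Sum>i<k. C $$ (i,k) * cofactor C i k) + C $$ (k,k) * cofactor C k k"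
    using laplace_expansion_column[OF C, of k] by (simp add: lessThan_Suc)
  moreover have "cofactor C k k = det (mat_delete C k k)"
    unfolding cofactor_def by (simp add: mult_2[symmetric])
  ultimately show ?thesis by (simp add: algebra_simps)
qed



definition ext :: "'a :: comm_ring_1 mat \<Rightarrow> 'a \<Rightarrow> 'a mat" where
  "ext F c = mat (Suc (dim_row F)) (Suc (dim_row F)) (\<lambda>(i,j).
     if i < dim_row F \<and> j < dim_row F then F $$ (i,j)
     else if i = dim_row F \<and> j = dim_row F then c
     else if i = dim_row F then (if j = dim_row F - 1 then 3 else F $$ (dim_row F - 1, j))
     else (if i = dim_row F - 1 then 3 else F $$ (i, dim_row F - 1)))"

lemma ext_carrier: "F \<in> carrier_mat (Suc l) (Suc l) \<Longrightarrow> ext F c \<in> carrier_mat (Suc (Suc l)) (Suc (Suc l))"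
  unfolding ext_def by auto

lemma ext_delete: "F \<in> carrier_mat (Suc l) (Suc l) \<Longrightarrow> mat_delete (ext F c) (Suc l) (Suc l) = F"
  unfolding ext_def mat_delete_def by (intro eq_matI) auto

lemma ext_corner: "F \<in> carrier_mat (Suc l) (Suc l) \<Longrightarrow> ext F c $$ (Suc l, Suc l) = c"
  unfolding ext_def by auto

lemma det_tilde_ext:
  fixes F :: "'a :: comm_ring_1 mat"
  assumes F: "F \<in> carrier_mat (Suc l) (Suc l)" and Fl: "F $$ (l,l) = c"
  shows "det (setl (ext F c) 3) = (c - 3) * det (setl F 3)"
proof -
  define M where "M = setl (ext F c) 3"
  have M: "M \<in> carrier_mat (Suc (Suc l)) (Suc (Suc l))"
    using F unfolding M_def setl_def ext_def by auto
  define G where "G = addrow (-1) l (Suc l) M"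
  have G: "G \<in> carrier_mat (Suc (Suc l)) (Suc (Suc l))" using M unfolding G_def by auto
  have dG: "det G = det M" unfolding G_def by (rule det_addrow[OF _ _ M], auto)
  have Gl: "G $$ (l, j) = (if j = l then c - 3 else 0)" if "j < Suc (Suc l)" for j
    using that F M Fl unfolding G_def M_def setl_def ext_def by auto
  have "det G = (\<Sum>j<Suc (Suc l). G $$ (l,j) * cofactor G l j)"
    by (rule laplace_expansion_row[OF G], simp)
  also have "\<dots> = (\<Sum>j<Suc (Suc l). if j = l then (c - 3) * cofactor G l l else 0)"
    by (rule sum.cong, auto simp: Gl)
  also have "\<dots> = (c - 3) * cofactor G l l" by simp
  also have "cofactor G l l = det (mat_delete G l l)"
    unfolding cofactor_def by (simp add: mult_2[symmetric])
  also have "mat_delete G l l = setl F 3"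
    using F M unfolding G_def M_def mat_delete_def setl_def ext_def
    by (intro eq_matI) (auto simp: less_Suc_eq)
  finally show ?thesis using dG M_def by simp
qed



definition Q :: "nat \<Rightarrow> real mat \<Rightarrow> (nat \<Rightarrow> real) \<Rightarrow> real" where
  "Q N M f = (\<Sum>i<N. \<Sum>j<N. f i * M $$ (i,j) * f j)"

definition P :: "nat \<Rightarrow> real mat \<Rightarrow> (nat \<Rightarrow> real) \<Rightarrow> (nat \<Rightarrow> real) \<Rightarrow> real" where
  "P N M f g = (\<Sum>i<N. \<Sum>j<N. f i * M $$ (i,j) * g j)"

definition PDQ :: "nat \<Rightarrow> real mat \<Rightarrow> bool" where
  "PDQ N M \<longleftrightarrow> (\<forall>f. (\<exists>i<N. f i \<noteq> 0) \<longrightarrow> Q N M f > 0)"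

lemma Q_cong: "(\<And>i. i < N \<Longrightarrow> f i = g i) \<Longrightarrow> Q N M f = Q N M g"
  unfolding Q_def by (intro sum.cong refl) auto

lemma quad_vec: assumes M: "M \<in> carrier_mat N N" and x: "x \<in> carrier_vec N"
  shows "x \<bullet> (M *\<^sub>v x) = Q N M (\<lambda>i. x $ i)"
proof -
  have "x \<bullet> (M *\<^sub>v x) = (\<Sum>i<N. x $ i * (\<Sum>j<N. M $$ (i,j) * x $ j))"
    using M x unfolding scalar_prod_def
    by (auto simp: atLeast0LessThan scalar_prod_def intro!: sum.cong)
  also have "\<dots> = Q N M (\<lambda>i. x $ i)" unfolding Q_def
    by (simp add: sum_distrib_left mult.assoc)
  finally show ?thesis .
qed

lemma PDQ_iff: assumes M: "M \<in> carrier_mat N N"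
  shows "(\<forall>x\<in>carrier_vec N. x \<noteq> 0\<^sub>v N \<longrightarrow> x \<bullet> (M *\<^sub>v x) > 0) \<longleftrightarrow> PDQ N M"
proof
  assume H: "\<forall>x\<in>carrier_vec N. x \<noteq> 0\<^sub>v N \<longrightarrow> x \<bullet> (M *\<^sub>v x) > 0"
  show "PDQ N M" unfolding PDQ_def
  proof (intro allI impI)
    fix f :: "nat \<Rightarrow> real" assume "\<exists>i<N. f i \<noteq> 0"
    then obtain i where i: "i < N" "f i \<noteq> 0" by auto
    have "vec N f \<noteq> 0\<^sub>v N" using i by (metis index_vec index_zero_vec(1))
    hence "vec N f \<bullet> (M *\<^sub>v vec N f) > 0" using H by auto
    also have "vec N f \<bullet> (M *\<^sub>v vec N f) = Q N M f"
      using quad_vec[OF M, of "vec N f"] by (auto intro: Q_cong)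
    finally show "Q N M f > 0" .
  qed
next
  assume H: "PDQ N M"
  show "\<forall>x\<in>carrier_vec N. x \<noteq> 0\<^sub>v N \<longrightarrow> x \<bullet> (M *\<^sub>v x) > 0"
  proof (intro ballI impI)
    fix x :: "real vec" assume x: "x \<in> carrier_vec N" and nz: "x \<noteq> 0\<^sub>v N"
    have "\<exists>i<N. x $ i \<noteq> 0"
    proof (rule ccontr)
      assume "\<not> ?thesis"
      hence "x = 0\<^sub>v N" using x by (intro eq_vecI) auto
      with nz show False by simp
    qed
    with H have "Q N M (\<lambda>i. x $ i) > 0" unfolding PDQ_def by auto
    thus "x \<bullet> (M *\<^sub>v x) > 0" using quad_vec[OF M x] by simp
  qed
qed

lemma Q_split: "Q (Suc N) M f = Q N M f + (\<Sum>i<N. f i * M $$ (i,N) * f N)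
   + (\<Sum>j<N. f N * M $$ (N,j) * f j) + f N * M $$ (N,N) * f N"
  unfolding Q_def by (simp add: lessThan_Suc sum.distrib)

lemma if0_simps: "(a::real) * (if B then b else 0) = (if B then a * b else 0)"
  "(if B then b else 0) * (a::real) = (if B then b * a else 0)" by auto

lemma Q_delta: assumes l: "l < N"
  shows "Q N M (\<lambda>i. f i + t * (if i = l then 1 else 0)) = Q N M f
     + t * (\<Sum>j<N. M $$ (l,j) * f j) + t * (\<Sum>i<N. f i * M $$ (i,l)) + t^2 * M $$ (l,l)"
proof -
  have "Q N M (\<lambda>i. f i + t * (if i = l then 1 else 0)) =
     Q N M f + (\<Sum>i<N. \<Sum>j<N. f i * M $$ (i,j) * (t * (if j = l then 1 else 0)))
     + (\<Sum>i<N. \<Sum>j<N. (t * (if i = l then 1 else 0)) * M $$ (i,j) * f j)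
     + (\<Sum>i<N. \<Sum>j<N. (t * (if i = l then 1 else 0)) * M $$ (i,j) * (t * (if j = l then 1 else 0)))"
    unfolding Q_def by (simp add: sum.distrib algebra_simps)
  also have "(\<Sum>i<N. \<Sum>j<N. f i * M $$ (i,j) * (t * (if j = l then 1 else 0))) = t * (\<Sum>i<N. f i * M $$ (i,l))"
  proof -
    have "(\<Sum>i<N. \<Sum>j<N. f i * M $$ (i,j) * (t * (if j = l then 1 else 0))) = (\<Sum>i<N. \<Sum>j<N. if j = l then t * (f i * M $$ (i,l)) else 0)"
      by (intro sum.cong refl) auto
    also have "\<dots> = t * (\<Sum>i<N. f i * M $$ (i,l))" using l by (simp add: sum_distrib_left)
    finally show ?thesis .
  qed
  also have "(\<Sum>i<N. \<Sum>j<N. (t * (if i = l then 1 else 0)) * M $$ (i,j) * f j) = t * (\<Sum>j<N. M $$ (l,j) * f j)"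
  proof -
    have "(\<Sum>i<N. \<Sum>j<N. (t * (if i = l then 1 else 0)) * M $$ (i,j) * f j) = (\<Sum>i<N. if i = l then (\<Sum>j<N. t * (M $$ (l,j) * f j)) else 0)"
      by (intro sum.cong refl) (auto simp: mult.assoc)
    also have "\<dots> = t * (\<Sum>j<N. M $$ (l,j) * f j)" using l by (simp add: sum_distrib_left)
    finally show ?thesis .
  qed
  also have "(\<Sum>i<N. \<Sum>j<N. (t * (if i = l then 1 else 0)) * M $$ (i,j) * (t * (if j = l then 1 else 0))) = t^2 * M $$ (l,l)"
  proof -
    have "(\<Sum>i<N. \<Sum>j<N. (t * (if i = l then 1 else 0)) * M $$ (i,j) * (t * (if j = l then 1 else 0))) = (\<Sum>i<N. if i = l then (\<Sum>j<N. if j = l then t * t * M $$ (l,l) else 0) else 0)"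
      by (intro sum.cong refl) (auto simp: if0_simps)
    also have "\<dots> = t^2 * M $$ (l,l)" using l by (simp add: power2_eq_square)
    finally show ?thesis .
  qed
  finally show ?thesis by (simp add: algebra_simps)
qed



lemma delete_index: assumes A: "A \<in> carrier_mat (Suc l) (Suc l)" and "i < l" "j < l"
  shows "mat_delete A l l $$ (i,j) = A $$ (i,j)"
  using assms unfolding mat_delete_def by auto

lemma Q_delete: assumes A: "A \<in> carrier_mat (Suc l) (Suc l)" and f: "f l = 0"
  shows "Q (Suc l) A f = Q l (mat_delete A l l) f"
proof -
  have "Q (Suc l) A f = Q l A f" unfolding Q_split using f by simp
  also have "\<dots> = Q l (mat_delete A l l) f" unfolding Q_def
    by (intro sum.cong refl) (simp add: delete_index[OF A])
  finally show ?thesis .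
qed

lemma PDQ_delete: assumes A: "A \<in> carrier_mat (Suc l) (Suc l)" and P: "PDQ (Suc l) A"
  shows "PDQ l (mat_delete A l l)"
  unfolding PDQ_def
proof (intro allI impI)
  fix f :: "nat \<Rightarrow> real" assume "\<exists>i<l. f i \<noteq> 0"
  then obtain i where i: "i < l" "f i \<noteq> 0" by auto
  define g where "g = f(l := 0)"
  have "Q (Suc l) A g > 0" using P i unfolding PDQ_def g_def
    by (metis fun_upd_other less_Suc_eq nat_neq_iff)
  also have "Q (Suc l) A g = Q l (mat_delete A l l) g" by (rule Q_delete[OF A], simp add: g_def)
  also have "\<dots> = Q l (mat_delete A l l) f" by (rule Q_cong, simp add: g_def)
  finally show "Q l (mat_delete A l l) f > 0" .
qed

lemma PDQ_psd: assumes "PDQ N M" shows "Q N M f \<ge> 0"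
proof (cases "\<exists>i<N. f i \<noteq> 0")
  case True thus ?thesis using assms unfolding PDQ_def by (simp add: less_imp_le)
next
  case False thus ?thesis unfolding Q_def by simp
qed

lemma adj_row: assumes M: "(M :: 'a :: comm_ring_1 mat) \<in> carrier_mat N N" and l: "l < N" and i: "i < N"
  shows "(\<Sum>j<N. M $$ (i,j) * cofactor M l j) = (if i = l then det M else 0)"
proof -
  have "(M * adj_mat M) $$ (i,l) = (det M \<cdot>\<^sub>m 1\<^sub>m N) $$ (i,l)" using adj_mat(2)[OF M] by simp
  moreover have "(M * adj_mat M) $$ (i,l) = (\<Sum>j<N. M $$ (i,j) * cofactor M l j)"
    using M l i adj_mat(1)[OF M] unfolding scalar_prod_def
    by (auto simp: adj_mat_def atLeast0LessThan scalar_prod_def intro!: sum.cong)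
  moreover have "(det M \<cdot>\<^sub>m 1\<^sub>m N) $$ (i,l) = (if i = l then det M else 0)" using i l by simp
  ultimately show ?thesis by simp
qed

lemma det_nz: assumes M: "M \<in> carrier_mat N N" and P: "PDQ N M" shows "det M \<noteq> 0"
proof
  assume "det M = 0"
  then obtain v where v: "v \<in> carrier_vec N" "v \<noteq> 0\<^sub>v N" "M *\<^sub>v v = 0\<^sub>v N"
    using det_0_iff_vec_prod_zero[OF M] by auto
  have "v \<bullet> (M *\<^sub>v v) > 0" using P PDQ_iff[OF M] v by auto
  moreover have "v \<bullet> (M *\<^sub>v v) = 0" using v by simp
  ultimately show False by simp
qed

lemma Q_cof: assumes M: "M \<in> carrier_mat (Suc l) (Suc l)"
  shows "Q (Suc l) M (\<lambda>j. cofactor M l j) = det M * det (mat_delete M l l)"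
proof -
  let ?u = "\<lambda>j. cofactor M l j"
  have "Q (Suc l) M ?u = (\<Sum>i<Suc l. ?u i * (\<Sum>j<Suc l. M $$ (i,j) * ?u j))"
    unfolding Q_def by (simp only: sum_distrib_left mult.assoc)
  also have "\<dots> = (\<Sum>i<Suc l. if i = l then ?u l * det M else 0)"
    by (intro sum.cong refl) (subst adj_row[OF M], auto)
  also have "\<dots> = ?u l * det M" by simp
  also have "?u l = det (mat_delete M l l)" unfolding cofactor_def by (simp add: mult_2[symmetric])
  finally show ?thesis by simp
qed

lemma cof_nz: assumes M: "M \<in> carrier_mat (Suc l) (Suc l)" and d: "det M \<noteq> 0"
  shows "\<exists>i<Suc l. cofactor M l i \<noteq> 0"
proof (rule ccontr)
  assume "\<not> ?thesis"
  hence "(\<Sum>j<Suc l. M $$ (l,j) * cofactor M l j) = 0" by simp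
  with adj_row[OF M, of l l] d show False by simp
qed

lemma pd_det_pos: "M \<in> carrier_mat N N \<Longrightarrow> PDQ N M \<Longrightarrow> det M > 0"
proof (induction N arbitrary: M)
  case 0
  hence "M = 1\<^sub>m 0" by (intro eq_matI) auto
  thus ?case by simp
next
  case (Suc l)
  have M: "M \<in> carrier_mat (Suc l) (Suc l)" by fact
  have d: "det M \<noteq> 0" using det_nz[OF M Suc.prems(2)] .
  have "det (mat_delete M l l) > 0"
    using Suc.IH[OF _ PDQ_delete[OF M Suc.prems(2)]] mat_delete_carrier[OF M] by simp
  moreover have "Q (Suc l) M (\<lambda>j. cofactor M l j) > 0"
    using Suc.prems(2) cof_nz[OF M d] unfolding PDQ_def by auto
  ultimately show ?case using Q_cof[OF M] by (simp add: zero_less_mult_iff)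
qed



lemma Q_lin: "Q N A (\<lambda>i. a * f i + b * g i) = a^2 * Q N A f + a * b * (P N A f g + P N A g f) + b^2 * Q N A g"
proof -
  have "Q N A (\<lambda>i. a * f i + b * g i) = (\<Sum>i<N. \<Sum>j<N. a^2 * (f i * A$$(i,j) * f j) + a*b*(f i * A$$(i,j) * g j)
      + a*b*(g i * A$$(i,j)*f j) + b^2*(g i * A$$(i,j) * g j))"
    unfolding Q_def by (intro sum.cong refl) (simp add: algebra_simps power2_eq_square)
  also have "\<dots> = (\<Sum>i<N. \<Sum>j<N. a^2 * (f i * A$$(i,j) * f j)) + (\<Sum>i<N. \<Sum>j<N. a*b*(f i * A$$(i,j) * g j))
      + (\<Sum>i<N. \<Sum>j<N. a*b*(g i * A$$(i,j)*f j)) + (\<Sum>i<N. \<Sum>j<N. b^2*(g i * A$$(i,j) * g j))"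
    by (simp only: sum.distrib)
  also have "\<dots> = a^2 * Q N A f + a * b * P N A f g + a * b * P N A g f + b^2 * Q N A g"
    unfolding Q_def P_def by (simp only: sum_distrib_left)
  finally show ?thesis by (simp add: algebra_simps)
qed

lemma P_sym: assumes sym: "\<And>i j. i < N \<Longrightarrow> j < N \<Longrightarrow> A $$ (i,j) = A $$ (j,i)"
  shows "P N A f g = P N A g f"
proof -
  have "P N A f g = (\<Sum>j<N. \<Sum>i<N. f i * A $$ (i,j) * g j)" unfolding P_def by (rule sum.swap)
  also have "\<dots> = P N A g f" unfolding P_def using sym by (intro sum.cong refl) (simp add: ac_simps)
  finally show ?thesis .
qed

lemma key_L:
  assumes A: "A \<in> carrier_mat (Suc l) (Suc l)"
    and sym: "\<And>i j. i < Suc l \<Longrightarrow> j < Suc l \<Longrightarrow> A $$ (i,j) = A $$ (j,i)"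
    and pd: "PDQ (Suc l) A" and c: "c \<ge> 0"
    and dc: "det A - c * det (mat_delete A l l) > 0"
  shows "c * (f l)^2 \<le> Q (Suc l) A f"
proof -
  define N where "N = Suc l"
  define u where "u = (\<lambda>j. cofactor A l j)"
  define d where "d = det A"
  define e where "e = det (mat_delete A l l)"
  have d: "d > 0" unfolding d_def by (rule pd_det_pos[OF A pd])
  have Qu: "Q N A u = d * e" unfolding N_def u_def d_def e_def by (rule Q_cof[OF A])
  have Qu_pos: "Q N A u > 0"
    using pd cof_nz[OF A] d unfolding PDQ_def N_def u_def d_def by auto
  have Pu: "P N A u f = d * f l"
  proof -
    have symN: "\<And>i j. i < N \<Longrightarrow> j < N \<Longrightarrow> A $$ (i,j) = A $$ (j,i)" using sym unfolding N_def .
    have "P N A u f = (\<Sum>j<N. \<Sum>i<N. u i * A $$ (i,j) * f j)" unfolding P_def by (rule sum.swap)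
    also have "\<dots> = (\<Sum>j<N. (\<Sum>i<N. A $$ (j,i) * u i) * f j)"
      unfolding sum_distrib_right by (intro sum.cong refl) (simp add: symN)
    also have "\<dots> = (\<Sum>j<N. (if j = l then d else 0) * f j)"
      unfolding u_def d_def N_def by (intro sum.cong refl) (subst adj_row[OF A], auto)
    also have "\<dots> = d * f l" by (simp add: N_def if0_simps)
    finally show ?thesis .
  qed
  have Pfu: "P N A f u = P N A u f" using P_sym sym unfolding N_def by blast
  have psd: "Q N A g \<ge> 0" for g using PDQ_psd pd unfolding N_def by blast
  define a where "a = Q N A u"
  define b where "b = - P N A u f"
  have "0 \<le> Q N A (\<lambda>i. a * f i + b * u i)" by (rule psd)
  also have "\<dots> = a * (a * Q N A f - (P N A u f)^2)"
    unfolding Q_lin Pfu b_def a_def by (simp add: algebra_simps power2_eq_square)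
  finally have "0 \<le> a * Q N A f - (P N A u f)^2"
    using Qu_pos unfolding a_def by (simp add: zero_le_mult_iff)
  hence "d * (d * (f l)^2) \<le> d * (e * Q N A f)" using Qu Pu unfolding a_def
    by (simp add: algebra_simps power2_eq_square)
  hence cs: "d * (f l)^2 \<le> e * Q N A f" using d by simp
  have "d * (c * (f l)^2) = c * (d * (f l)^2)" by simp
  also have "\<dots> \<le> c * (e * Q N A f)" using cs c by (rule mult_left_mono)
  also have "\<dots> = (c * e) * Q N A f" by simp
  also have "\<dots> \<le> d * Q N A f" using dc psd[of f] unfolding d_def e_def
    by (intro mult_right_mono) auto
  finally have "d * (c * (f l)^2) \<le> d * Q N A f" .
  thus ?thesis using d unfolding N_def by simp
qed



lemma ext_entries: assumes F: "F \<in> carrier_mat (Suc l) (Suc l)"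
  shows "i < Suc l \<Longrightarrow> j < Suc l \<Longrightarrow> ext F c $$ (i,j) = F $$ (i,j)"
    "i < Suc l \<Longrightarrow> ext F c $$ (i, Suc l) = (if i = l then 3 else F $$ (i,l))"
    "j < Suc l \<Longrightarrow> ext F c $$ (Suc l, j) = (if j = l then 3 else F $$ (l,j))"
    "ext F c $$ (Suc l, Suc l) = c"
  using F unfolding ext_def by auto

lemma ext_Q:
  fixes F :: "real mat" and f :: "nat \<Rightarrow> real" and n :: real
  assumes F: "F \<in> carrier_mat (Suc l) (Suc l)" and Fl: "F $$ (l,l) = n"
  defines "t \<equiv> f (Suc l)"
  defines "g \<equiv> (\<lambda>i. f i + t * (if i = l then 1 else 0))"
  shows "Q (Suc (Suc l)) (ext F n) f = Q (Suc l) F g - (n-3)*(g l)^2 + (n-3)*(f l)^2 + (n-3)*t^2"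
proof -
  let ?E = "ext F n"
  have S0: "Q (Suc l) ?E f = Q (Suc l) F f" unfolding Q_def
    by (intro sum.cong refl) (simp add: ext_entries[OF F])
  have S1: "(\<Sum>i<Suc l. f i * ?E $$ (i,Suc l) * f (Suc l)) = t * (\<Sum>i<Suc l. f i * F $$ (i,l)) - (n-3) * f l * t"
  proof -
    have "(\<Sum>i<Suc l. f i * ?E $$ (i,Suc l) * f (Suc l)) = (\<Sum>i<Suc l. t * (f i * F $$ (i,l)) - (if i = l then (n-3) * f l * t else 0))"
      by (intro sum.cong refl) (auto simp: ext_entries[OF F] Fl t_def algebra_simps)
    also have "\<dots> = t * (\<Sum>i<Suc l. f i * F $$ (i,l)) - (n-3) * f l * t"
      by (simp only: sum_subtractf sum_distrib_left[symmetric]) simp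
    finally show ?thesis .
  qed
  have S2: "(\<Sum>j<Suc l. f (Suc l) * ?E $$ (Suc l,j) * f j) = t * (\<Sum>j<Suc l. F $$ (l,j) * f j) - (n-3) * f l * t"
  proof -
    have "(\<Sum>j<Suc l. f (Suc l) * ?E $$ (Suc l,j) * f j) = (\<Sum>j<Suc l. t * (F $$ (l,j) * f j) - (if j = l then (n-3) * f l * t else 0))"
      by (intro sum.cong refl) (auto simp: ext_entries[OF F] Fl t_def algebra_simps)
    also have "\<dots> = t * (\<Sum>j<Suc l. F $$ (l,j) * f j) - (n-3) * f l * t"
      by (simp only: sum_subtractf sum_distrib_left[symmetric]) simp
    finally show ?thesis .
  qed
  have S3: "?E $$ (Suc l, Suc l) = n" by (simp add: ext_entries[OF F])
  have QE: "Q (Suc (Suc l)) ?E f = Q (Suc l) F f + (t * (\<Sum>i<Suc l. f i * F $$ (i,l)) - (n-3) * f l * t)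
     + (t * (\<Sum>j<Suc l. F $$ (l,j) * f j) - (n-3) * f l * t) + t * n * t"
    using Q_split[of "Suc l" ?E f] S0 S1 S2 S3 unfolding t_def by simp
  have Qg: "Q (Suc l) F g = Q (Suc l) F f + t * (\<Sum>j<Suc l. F $$ (l,j) * f j) + t * (\<Sum>i<Suc l. f i * F $$ (i,l)) + t^2 * n"
    unfolding g_def using Q_delta[of l "Suc l" F f t] Fl by simp
  have gl: "g l = f l + t" unfolding g_def by simp
  show ?thesis unfolding QE Qg gl by (simp add: algebra_simps power2_eq_square)
qed

lemma ext_PD:
  fixes F :: "real mat"
  assumes F: "F \<in> carrier_mat (Suc l) (Suc l)" and Fl: "F $$ (l,l) = n" and n3: "n > 3"
    and pd: "PDQ (Suc l) F"
    and key: "\<And>g. (n-3) * (g l)^2 \<le> Q (Suc l) F g"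
  shows "PDQ (Suc (Suc l)) (ext F n)"
  unfolding PDQ_def
proof (intro allI impI)
  fix f :: "nat \<Rightarrow> real" assume nz: "\<exists>i<Suc (Suc l). f i \<noteq> 0"
  define t where "t = f (Suc l)"
  define g where "g = (\<lambda>i. f i + t * (if i = l then 1 else 0))"
  have eq: "Q (Suc (Suc l)) (ext F n) f = Q (Suc l) F g - (n-3)*(g l)^2 + (n-3)*(f l)^2 + (n-3)*t^2"
    unfolding g_def t_def by (rule ext_Q[OF F Fl])
  have k: "(n-3)*(g l)^2 \<le> Q (Suc l) F g" by (rule key)
  show "Q (Suc (Suc l)) (ext F n) f > 0"
  proof (cases "t = 0 \<and> f l = 0")
    case False
    hence "(n-3)*(f l)^2 + (n-3)*t^2 > 0" using n3
      by (auto intro: add_pos_nonneg add_nonneg_pos)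
    thus ?thesis using eq k by linarith
  next
    case True
    then obtain i where i: "i < Suc l" "f i \<noteq> 0" using nz unfolding t_def
      by (metis less_Suc_eq)
    have "g = f" unfolding g_def using True by simp
    hence "Q (Suc l) F g > 0" using pd i unfolding PDQ_def by auto
    thus ?thesis using eq True \<open>g = f\<close> by simp
  qed
qed



lemma frakC_iff: "C \<in> frakC n m \<longleftrightarrow> C \<in> carrier_mat m m \<and> (\<forall>i<m. \<forall>j<m. C$$(i,j) = C$$(j,i))
   \<and> PDQ m (map_mat real_of_int C) \<and> (\<forall>i<m. C$$(i,i) = n) \<and> (\<forall>i<m. \<forall>j<m. C$$(i,j) mod 4 = n mod 4)"
proof (cases "C \<in> carrier_mat m m")
  case True
  have R: "map_mat real_of_int C \<in> carrier_mat m m" using True by simp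
  have T: "C = transpose_mat C \<longleftrightarrow> (\<forall>i<m. \<forall>j<m. C$$(i,j) = C$$(j,i))"
  proof
    assume h: "C = transpose_mat C"
    show "\<forall>i<m. \<forall>j<m. C$$(i,j) = C$$(j,i)"
    proof (intro allI impI)
      fix i j assume "i < m" "j < m"
      hence e: "transpose_mat C $$ (i,j) = C $$ (j,i)" using True by simp
      show "C$$(i,j) = C$$(j,i)" using e unfolding h[symmetric] .
    qed
  next
    assume "\<forall>i<m. \<forall>j<m. C$$(i,j) = C$$(j,i)"
    thus "C = transpose_mat C" using True by (intro eq_matI) auto
  qed
  have dr: "dim_row C = m" using True by simp
  have "C \<in> frakC n m \<longleftrightarrow> (C = transpose_mat C \<and> (\<forall>x\<in>carrier_vec m. x \<noteq> 0\<^sub>v m \<longrightarrow> x \<bullet> (map_mat real_of_int C *\<^sub>v x) > 0))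
     \<and> (\<forall>i<m. C$$(i,i) = n) \<and> (\<forall>i<m. \<forall>j<m. C$$(i,j) mod 4 = n mod 4)"
    unfolding frakC_def pos_def_int_def dr using True by blast
  thus ?thesis unfolding T PDQ_iff[OF R] using True by blast
next
  case False thus ?thesis unfolding frakC_def by auto
qed

lemma frakE_iff: "E \<in> frakE n Mr m \<longleftrightarrow> E \<in> frakC n m \<and> (\<forall>i<dim_row Mr. \<forall>j<dim_row Mr. E $$ (i,j) = Mr $$ (i,j))"
  unfolding frakE_def by auto

lemma entry_bound: assumes n0: "n > 0" and C: "C \<in> frakC n m" and i: "i < m" and j: "j < m"
  shows "\<bar>C $$ (i,j)\<bar> \<le> n"
proof (cases "i = j")
  case True thus ?thesis using C i n0 unfolding frakC_iff by auto
next
  case False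
  let ?R = "map_mat real_of_int C"
  have Cc: "C \<in> carrier_mat m m" and sym: "C$$(i,j) = C$$(j,i)" and pd: "PDQ m ?R"
    and dg: "C$$(i,i) = n" "C$$(j,j) = n" using C i j unfolding frakC_iff by auto
  have Ri: "?R $$ (a,b) = real_of_int (C $$ (a,b))" if "a < m" "b < m" for a b using that Cc by simp
  define f1 where "f1 = (\<lambda>k. (0::real) + 1 * (if k = i then 1 else 0))"
  have q0: "Q m ?R (\<lambda>k. 0) = 0" unfolding Q_def by simp
  have q1: "Q m ?R f1 = n" unfolding f1_def using Q_delta[OF i, of ?R "\<lambda>k. 0" 1] q0 Ri[OF i i] dg by simp
  have a1: "(\<Sum>k<m. ?R $$ (j,k) * f1 k) = C $$ (i,j)"
  proof -
    have "(\<Sum>k<m. ?R $$ (j,k) * f1 k) = ?R $$ (j,i)" unfolding f1_def using i by (simp add: if0_simps)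
    also have "\<dots> = real_of_int (C $$ (i,j))" using Ri[OF j i] sym by metis
    finally show ?thesis .
  qed
  have a2: "(\<Sum>k<m. f1 k * ?R $$ (k,j)) = C $$ (i,j)"
    unfolding f1_def using i j Ri by (simp add: if0_simps)
  have val: "Q m ?R (\<lambda>k. f1 k + s * (if k = j then 1 else 0)) = 2 * real_of_int n + 2 * s * real_of_int (C $$ (i,j))" if s: "s^2 = 1" for s :: real
  proof -
    have "Q m ?R (\<lambda>k. f1 k + s * (if k = j then 1 else 0)) = Q m ?R f1 + s * (\<Sum>k<m. ?R $$ (j,k) * f1 k) + s * (\<Sum>k<m. f1 k * ?R $$ (k,j)) + s^2 * ?R $$ (j,j)"
      by (rule Q_delta[OF j])
    thus ?thesis using q1 a1 a2 Ri[OF j j] dg(2) s by simp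
  qed
  have pos: "Q m ?R (\<lambda>k. f1 k + s * (if k = j then 1 else 0)) > 0" for s :: real
  proof -
    have "f1 i + s * (if i = j then 1 else 0) \<noteq> 0" unfolding f1_def using False by simp
    hence ex: "\<exists>i'<m. (\<lambda>k. f1 k + s * (if k = j then 1 else 0)) i' \<noteq> 0" using i by auto
    have H: "\<And>g. (\<exists>i<m. g i \<noteq> 0) \<Longrightarrow> Q m ?R g > 0" using pd unfolding PDQ_def by blast
    show ?thesis by (rule H[OF ex])
  qed
  have "0 < 2 * real_of_int n + 2 * 1 * real_of_int (C $$ (i,j))" using val[of 1] pos[of 1] by simp
  moreover have "0 < 2 * real_of_int n + 2 * (-1) * real_of_int (C $$ (i,j))" using val[of "-1"] pos[of "-1"] by simp
  ultimately show ?thesis by linarith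
qed

lemma finite_frakE: assumes n0: "n > 0" shows "finite (frakE n Mr m)"
proof -
  let ?B = "{C \<in> carrier_mat m m. \<forall>i<m. \<forall>j<m. C$$(i,j) \<in> {-n..n}}"
  let ?h = "\<lambda>C :: int mat. restrict (\<lambda>p. C $$ p) ({0..<m}\<times>{0..<m})"
  have sub: "frakE n Mr m \<subseteq> ?B"
  proof
    fix C assume "C \<in> frakE n Mr m"
    hence C: "C \<in> frakC n m" unfolding frakE_iff by auto
    hence "C \<in> carrier_mat m m" unfolding frakC_iff by auto
    moreover have "\<forall>i<m. \<forall>j<m. C$$(i,j) \<in> {-n..n}" using entry_bound[OF n0 C]
      by (metis abs_le_D1 abs_le_D2 atLeastAtMost_iff minus_le_iff)
    ultimately show "C \<in> ?B" by auto
  qed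
  have inj: "inj_on ?h ?B"
  proof (rule inj_onI)
    fix C D assume C: "C \<in> ?B" and D: "D \<in> ?B" and eq: "?h C = ?h D"
    show "C = D"
    proof (rule eq_matI)
      fix i j assume "i < dim_row D" "j < dim_col D"
      hence ij: "(i,j) \<in> {0..<m}\<times>{0..<m}" using D by auto
      show "C $$ (i,j) = D $$ (i,j)" using fun_cong[OF eq, of "(i,j)"] ij by simp
    qed (use C D in auto)
  qed
  have "?h ` ?B \<subseteq> PiE ({0..<m}\<times>{0..<m}) (\<lambda>_. {-n..n})"
  proof (rule image_subsetI)
    fix C assume C: "C \<in> ?B"
    show "?h C \<in> PiE ({0..<m}\<times>{0..<m}) (\<lambda>_. {-n..n})"
      unfolding restrict_PiE_iff
    proof
      fix p assume "p \<in> {0..<m}\<times>{0..<m}"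
      then obtain i j where "p = (i,j)" "i < m" "j < m" by auto
      thus "C $$ p \<in> {-n..n}" using C by blast
    qed
  qed
  hence "finite (?h ` ?B)" by (rule finite_subset) (intro finite_PiE, auto)
  hence "finite ?B" using inj finite_imageD by blast
  thus ?thesis using sub finite_subset by blast
qed



lemma mapR_ext: assumes F: "F \<in> carrier_mat (Suc l) (Suc l)"
  shows "map_mat real_of_int (ext F c) = ext (map_mat real_of_int F) (real_of_int c)"
  using F unfolding ext_def by (intro eq_matI) auto

lemma mapR_delete: assumes A: "A \<in> carrier_mat (Suc l) (Suc l)"
  shows "map_mat real_of_int (mat_delete A l l) = mat_delete (map_mat real_of_int A) l l"
  using A unfolding mat_delete_def by (intro eq_matI) auto

lemma mapR_setl: "map_mat real_of_int (setl A 3) = setl (map_mat real_of_int A) 3"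
  unfolding setl_def by (intro eq_matI) auto

lemma ext_mem:
  assumes n4: "n mod 4 = 3" and n3: "n > 3" and F: "F \<in> frakE n Mr (Suc l)"
    and dt: "det (tilde F) > 0" and r: "dim_row Mr \<le> Suc l"
  shows "ext F n \<in> frakE n Mr (Suc (Suc l))"
proof -
  have FC: "F \<in> frakC n (Suc l)" and FMr: "\<forall>i<dim_row Mr. \<forall>j<dim_row Mr. F $$ (i,j) = Mr $$ (i,j)"
    using F unfolding frakE_iff by auto
  have Fc: "F \<in> carrier_mat (Suc l) (Suc l)" and symF: "\<forall>i<Suc l. \<forall>j<Suc l. F$$(i,j) = F$$(j,i)"
    and pdF: "PDQ (Suc l) (map_mat real_of_int F)" and dgF: "\<forall>i<Suc l. F$$(i,i) = n"
    and mdF: "\<forall>i<Suc l. \<forall>j<Suc l. F$$(i,j) mod 4 = n mod 4"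
    using FC unfolding frakC_iff by auto
  let ?RF = "map_mat real_of_int F"
  have RFc: "?RF \<in> carrier_mat (Suc l) (Suc l)" using Fc by simp
  have RFl: "?RF $$ (l,l) = real_of_int n" using Fc dgF by simp
  have symRF: "\<And>i j. i < Suc l \<Longrightarrow> j < Suc l \<Longrightarrow> ?RF $$ (i,j) = ?RF $$ (j,i)"
    using Fc symF by simp
  have "det (setl ?RF 3) = det ?RF + (3 - real_of_int n) * det (mat_delete ?RF l l)"
    using det_setl[OF RFc, of 3] RFl by simp
  moreover have "det (setl ?RF 3) = real_of_int (det (tilde F))"
    unfolding tilde_setl mapR_setl[symmetric] of_int_hom.hom_det ..
  ultimately have dc: "det ?RF - (real_of_int n - 3) * det (mat_delete ?RF l l) > 0"
    using dt by (simp add: algebra_simps)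
  have key: "(real_of_int n - 3) * (g l)^2 \<le> Q (Suc l) ?RF g" for g
    by (rule key_L[OF RFc symRF pdF _ dc], insert n3, auto)
  have pdE: "PDQ (Suc (Suc l)) (map_mat real_of_int (ext F n))"
    unfolding mapR_ext[OF Fc] by (rule ext_PD[OF RFc RFl _ pdF key], insert n3, auto)
  let ?E = "ext F n"
  have Ec: "?E \<in> carrier_mat (Suc (Suc l)) (Suc (Suc l))" by (rule ext_carrier[OF Fc])
  have ent: "?E $$ (i,j) = (if i < Suc l \<and> j < Suc l then F $$ (i,j)
     else if i = Suc l \<and> j = Suc l then n
     else if i = Suc l then (if j = l then 3 else F $$ (l,j))
     else (if i = l then 3 else F $$ (i,l)))" if "i < Suc (Suc l)" "j < Suc (Suc l)" for i j
    using that Fc unfolding ext_def by simp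
  have symE: "\<forall>i<Suc (Suc l). \<forall>j<Suc (Suc l). ?E$$(i,j) = ?E$$(j,i)"
  proof (intro allI impI)
    fix i j assume ij: "i < Suc (Suc l)" "j < Suc (Suc l)"
    have ci: "i < Suc l \<or> i = Suc l" and cj: "j < Suc l \<or> j = Suc l" using ij by auto
    show "?E$$(i,j) = ?E$$(j,i)"
    proof (cases "i < Suc l")
      case True note i = this
      show ?thesis
      proof (cases "j < Suc l")
        case True
        have "F$$(i,j) = F$$(j,i)" using symF i True by blast
        thus ?thesis unfolding ent[OF ij] ent[OF ij(2,1)] using i True by simp
      next
        case False
        hence j: "j = Suc l" using cj by simp
        have "F$$(i,l) = F$$(l,i)" using symF i by blast
        thus ?thesis unfolding ent[OF ij] ent[OF ij(2,1)] using i j by simp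
      qed
    next
      case False
      hence i: "i = Suc l" using ci by simp
      show ?thesis
      proof (cases "j < Suc l")
        case True
        have "F$$(j,l) = F$$(l,j)" using symF True by blast
        thus ?thesis unfolding ent[OF ij] ent[OF ij(2,1)] using i True by simp
      next
        case False
        hence j: "j = Suc l" using cj by simp
        show ?thesis using i j by simp
      qed
    qed
  qed
  have dgE: "\<forall>i<Suc (Suc l). ?E$$(i,i) = n"
  proof (intro allI impI)
    fix i assume i: "i < Suc (Suc l)"
    show "?E$$(i,i) = n"
    proof (cases "i < Suc l")
      case True thus ?thesis unfolding ent[OF i i] using dgF by simp
    next
      case False hence "i = Suc l" using i by simp
      thus ?thesis unfolding ent[OF i i] by simp
    qed
  qed
  have mdE: "\<forall>i<Suc (Suc l). \<forall>j<Suc (Suc l). ?E$$(i,j) mod 4 = n mod 4"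
  proof (intro allI impI)
    fix i j assume ij: "i < Suc (Suc l)" "j < Suc (Suc l)"
    have ci: "i < Suc l \<or> i = Suc l" and cj: "j < Suc l \<or> j = Suc l" using ij by auto
    have m1: "F$$(i,j) mod 4 = n mod 4" if "i < Suc l" "j < Suc l" for i j using mdF that by blast
    have m3: "(3::int) mod 4 = n mod 4" using n4 by simp
    show "?E$$(i,j) mod 4 = n mod 4" unfolding ent[OF ij]
      using ci cj m1[of i j] m1[of l j] m1[of i l] m3 by auto
  qed
  have MrE: "\<forall>i<dim_row Mr. \<forall>j<dim_row Mr. ?E $$ (i,j) = Mr $$ (i,j)"
  proof (intro allI impI)
    fix i j assume ij: "i < dim_row Mr" "j < dim_row Mr"
    hence ij': "i < Suc l" "j < Suc l" using r by auto
    hence i2: "i < Suc (Suc l)" "j < Suc (Suc l)" by auto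
    show "?E $$ (i,j) = Mr $$ (i,j)" unfolding ent[OF i2] using ij' ij FMr by auto
  qed
  show ?thesis unfolding frakE_iff frakC_iff by (intro conjI Ec symE pdE dgE mdE MrE)
qed

lemma delete_mem:
  assumes E: "E \<in> frakE n Mr (Suc k)" and r: "dim_row Mr \<le> k"
  shows "mat_delete E k k \<in> frakE n Mr k"
proof -
  have EC: "E \<in> frakC n (Suc k)" and EMr: "\<forall>i<dim_row Mr. \<forall>j<dim_row Mr. E $$ (i,j) = Mr $$ (i,j)"
    using E unfolding frakE_iff by auto
  have Ec: "E \<in> carrier_mat (Suc k) (Suc k)" and symE: "\<forall>i<Suc k. \<forall>j<Suc k. E$$(i,j) = E$$(j,i)"
    and pdE: "PDQ (Suc k) (map_mat real_of_int E)" and dgE: "\<forall>i<Suc k. E$$(i,i) = n"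
    and mdE: "\<forall>i<Suc k. \<forall>j<Suc k. E$$(i,j) mod 4 = n mod 4"
    using EC unfolding frakC_iff by auto
  let ?A = "mat_delete E k k"
  have Ac: "?A \<in> carrier_mat k k" using mat_delete_carrier[OF Ec] by simp
  have ent: "?A $$ (i,j) = E $$ (i,j)" if "i < k" "j < k" for i j using delete_index[OF Ec that] .
  have pdA: "PDQ k (map_mat real_of_int ?A)"
    unfolding mapR_delete[OF Ec] by (rule PDQ_delete[OF _ pdE], insert Ec, simp)
  have "?A \<in> frakC n k" unfolding frakC_iff using Ac pdA ent symE dgE mdE by auto
  moreover have "\<forall>i<dim_row Mr. \<forall>j<dim_row Mr. ?A $$ (i,j) = Mr $$ (i,j)"
    using ent EMr r by auto
  ultimately show ?thesis unfolding frakE_iff by auto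
qed

lemma det_tilde_rel:
  assumes E: "E \<in> frakC n (Suc k)"
  shows "det (tilde E) = det E - (n - 3) * det (mat_delete E k k)"
proof -
  have Ec: "E \<in> carrier_mat (Suc k) (Suc k)" and "E $$ (k,k) = n" using E unfolding frakC_iff by auto
  thus ?thesis unfolding tilde_setl using det_setl[OF Ec, of 3] by (simp add: algebra_simps)
qed



lemma base_frakE: assumes Mr: "Mr \<in> frakC n r" shows "frakE n Mr r = {Mr}"
proof -
  have Mc: "Mr \<in> carrier_mat r r" using Mr unfolding frakC_iff by auto
  have "E = Mr" if E: "E \<in> frakE n Mr r" for E
  proof -
    have Ec: "E \<in> carrier_mat r r" using E unfolding frakE_iff frakC_iff by auto
    have "\<forall>i<dim_row Mr. \<forall>j<dim_row Mr. E $$ (i,j) = Mr $$ (i,j)" using E unfolding frakE_iff by auto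
    thus ?thesis using Ec Mc by (intro eq_matI) auto
  qed
  moreover have "Mr \<in> frakE n Mr r" unfolding frakE_iff using Mr by auto
  ultimately show ?thesis by blast
qed

lemma main:
  assumes n4: "n mod 4 = 3" and n3: "n > 3" and r1: "1 \<le> r"
    and Mr: "Mr \<in> frakC n r" and dtM: "det (tilde Mr) > 0"
    and rk: "r \<le> k"
  shows "frakE n Mr k \<noteq> {} \<and> (\<forall>E\<in>frakE n Mr k. det E = Max (det ` frakE n Mr k) \<longrightarrow> det (tilde E) > 0)"
  using rk
proof (induction k rule: dec_induct)
  case base
  show ?case unfolding base_frakE[OF Mr] using dtM by auto
next
  case (step k)
  have dimMr: "dim_row Mr = r" using Mr unfolding frakC_iff by auto
  have n0: "n > 0" using n3 by simp
  have fin: "finite (det ` frakE n Mr k)" using finite_frakE[OF n0] by simp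
  have ne: "det ` frakE n Mr k \<noteq> {}" using step.IH by simp
  obtain F where F: "F \<in> frakE n Mr k" and dF: "det F = Max (det ` frakE n Mr k)"
    using Max_in[OF fin ne] by auto
  have dtF: "det (tilde F) > 0" using step.IH F dF by blast
  obtain l where kl: "k = Suc l" using step.hyps r1 by (cases k) auto
  have Fc: "F \<in> carrier_mat (Suc l) (Suc l)" using F unfolding kl frakE_iff frakC_iff by auto
  have Fl: "F $$ (l,l) = n" using F unfolding kl frakE_iff frakC_iff by auto
  let ?E = "ext F n"
  have E: "?E \<in> frakE n Mr (Suc k)"
    unfolding kl by (rule ext_mem[OF n4 n3 F[unfolded kl] dtF], insert step.hyps dimMr kl, simp)
  have finS: "finite (det ` frakE n Mr (Suc k))" using finite_frakE[OF n0] by simp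
  have dtE: "det (tilde ?E) = det ?E - (n - 3) * det F"
    using det_tilde_rel[of ?E n k] E ext_delete[OF Fc] unfolding frakE_iff kl by auto
  have dtE2: "det (tilde ?E) = (n - 3) * det (tilde F)"
    unfolding tilde_setl by (rule det_tilde_ext[OF Fc Fl])
  have "\<forall>E'\<in>frakE n Mr (Suc k). det E' = Max (det ` frakE n Mr (Suc k)) \<longrightarrow> det (tilde E') > 0"
  proof (intro ballI impI)
    fix E' assume E': "E' \<in> frakE n Mr (Suc k)" and dE': "det E' = Max (det ` frakE n Mr (Suc k))"
    have "det ?E \<le> det E'" unfolding dE' using finS E by auto
    have A': "mat_delete E' k k \<in> frakE n Mr k" by (rule delete_mem[OF E'], insert step.hyps dimMr, simp)
    have "det (mat_delete E' k k) \<le> det F" unfolding dF using fin A' by auto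
    hence m: "(n - 3) * det (mat_delete E' k k) \<le> (n - 3) * det F" using n3 by (intro mult_left_mono) auto
    have "det (tilde E') = det E' - (n - 3) * det (mat_delete E' k k)"
      using det_tilde_rel[of E' n k] E' unfolding frakE_iff by auto
    moreover have "(n - 3) * det (tilde F) > 0" using n3 dtF by simp
    ultimately show "det (tilde E') > 0" using m dtE dtE2 \<open>det ?E \<le> det E'\<close> by linarith
  qed
  thus ?case using E by auto
qed

theorem corollary1:
  fixes n :: int and r m :: nat and Mr Estar :: "int mat"
  assumes "n mod 4 = 3" and "n > 3"
    and "1 \<le> r" and "r \<le> m"
    and "Mr \<in> frakC n r"
    and "det (tilde Mr) > 0"
    and "Estar \<in> frakE n Mr m"
    and "det Estar = Max (det ` frakE n Mr m)"
  shows "det (tilde Estar) > 0"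
  using main[OF assms(1,2,3,5,6,4)] assms(7,8) by blast


end
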